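(* Let $d$ be a fixed positive integer. If $G$ is an unweighted $d$-regular graph on $n$ vertices that is a $(\frac{d}{10},\frac{n}{2})$-edge expander, then $\rho^*_G=\Theta(n)$ (as $n\to\infty$, with constants depending only on $d$).
   Context: A graph $G=(V,E)$ is an $(\alpha,k)$-edge expander if every $S\subseteq V$ with $|S|\le k$ has at least $\alpha|S|$ edges between $S$ and $V\setminus S$. Unweighted means all edges have weight $1$ and non-edges weight $0$. An HC-tree for $V=\{v_1,\dots,v_n\}$ is a rooted tree with leaf set $V$. For distinct $i,j,k$: $\{i,j|k\}$ holds in $T$ if $\mathrm{LCA}(v_i,v_j)$ is a proper descendant of $\mathrm{LCA}(v_i,v_j,v_k)$; $\{i|j|k\}$ holds if $\mathrm{LCA}(v_i,v_j)=\mathrm{LCA}(v_j,v_k)=\mathrm{LCA}(v_i,v_j,v_k)$. Triplet cost $c_T(i,j,k)$: $w_{ik}+w_{jk}$ if $\{i,j|k\}$; $w_{ij}+w_{jk}$ if $\{i,k|j\}$; $w_{ij}+w_{ik}$ if $\{j,k|i\}$; $w_{ij}+w_{jk}+w_{ik}$ if $\{i|j|k\}$. $\mathrm{TC}_G(T)=\sum c_T(i,j,k)$ and $\mathrm{BC}(G)=\sum\min\{w_{ij}+w_{ik},w_{ij}+w_{jk},w_{ik}+w_{jk}\}$, both over unordered triples of distinct indices. $\rho_G(T)=\mathrm{TC}_G(T)/\mathrm{BC}(G)$ (with $0/0=1$, $x/0=+\infty$ for $x>0$) and $\rho^*_G=\min_T\rho_G(T)$. *)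

theory Defs
  imports Complex_Main "HOL-Library.Extended_Real"
begin

text \<open>A simple undirected unweighted graph on vertices 0..n-1 (v_{i+1} = i), given by
  a symmetric irreflexive adjacency relation supported on {0..<n}.\<close>
definition is_graph :: "nat \<Rightarrow> (nat \<Rightarrow> nat \<Rightarrow> bool) \<Rightarrow> bool" where
  "is_graph n E \<longleftrightarrow> (\<forall>u v. E u v \<longrightarrow> u < n \<and> v < n \<and> u \<noteq> v \<and> E v u)"

definition d_regular :: "nat \<Rightarrow> (nat \<Rightarrow> nat \<Rightarrow> bool) \<Rightarrow> nat \<Rightarrow> bool" where
  "d_regular n E d \<longleftrightarrow> (\<forall>u<n. card {v. v < n \<and> E u v} = d)"

definition wt :: "(nat \<Rightarrow> nat \<Rightarrow> bool) \<Rightarrow> nat \<Rightarrow> nat \<Rightarrow> real" where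
  "wt E i j = (if E i j then 1 else 0)"

definition edge_expander :: "nat \<Rightarrow> (nat \<Rightarrow> nat \<Rightarrow> bool) \<Rightarrow> real \<Rightarrow> real \<Rightarrow> bool" where
  "edge_expander n E \<alpha> k \<longleftrightarrow>
     (\<forall>S. S \<subseteq> {0..<n} \<longrightarrow> real (card S) \<le> k \<longrightarrow>
        real (card {(u, v). u \<in> S \<and> v \<in> {0..<n} - S \<and> E u v}) \<ge> \<alpha> * real (card S))"

datatype hctree = Leaf nat | Node "hctree list"

fun leaves :: "hctree \<Rightarrow> nat list" where
  "leaves (Leaf x) = [x]"
| "leaves (Node ts) = concat (map leaves ts)"

text \<open>No childless internal nodes (every leaf of the rooted tree is labelled).\<close>
fun wf_tree :: "hctree \<Rightarrow> bool" where
  "wf_tree (Leaf x) = True"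
| "wf_tree (Node ts) = (ts \<noteq> [] \<and> (\<forall>t\<in>set ts. wf_tree t))"

definition is_hctree :: "nat \<Rightarrow> hctree \<Rightarrow> bool" where
  "is_hctree n T \<longleftrightarrow> wf_tree T \<and> distinct (leaves T) \<and> set (leaves T) = {0..<n}"

fun subtrees :: "hctree \<Rightarrow> hctree set" where
  "subtrees (Leaf x) = {Leaf x}"
| "subtrees (Node ts) = insert (Node ts) (\<Union>t\<in>set ts. subtrees t)"

definition lca :: "hctree \<Rightarrow> nat set \<Rightarrow> hctree" where
  "lca T A = (THE u. u \<in> subtrees T \<and> A \<subseteq> set (leaves u) \<and>
                (\<forall>v\<in>subtrees T. A \<subseteq> set (leaves v) \<longrightarrow> u \<in> subtrees v))"

definition proper_desc :: "hctree \<Rightarrow> hctree \<Rightarrow> bool" where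
  "proper_desc u v \<longleftrightarrow> u \<in> subtrees v \<and> u \<noteq> v"

definition sep :: "hctree \<Rightarrow> nat \<Rightarrow> nat \<Rightarrow> nat \<Rightarrow> bool" where
  "sep T i j k \<longleftrightarrow> proper_desc (lca T {i, j}) (lca T {i, j, k})"

definition star3 :: "hctree \<Rightarrow> nat \<Rightarrow> nat \<Rightarrow> nat \<Rightarrow> bool" where
  "star3 T i j k \<longleftrightarrow> lca T {i, j} = lca T {j, k} \<and> lca T {j, k} = lca T {i, j, k}"

definition trip_cost :: "(nat \<Rightarrow> nat \<Rightarrow> bool) \<Rightarrow> hctree \<Rightarrow> nat \<Rightarrow> nat \<Rightarrow> nat \<Rightarrow> real" where
  "trip_cost E T i j k =
     (if sep T i j k then wt E i k + wt E j k
      else if sep T i k j then wt E i j + wt E j k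
      else if sep T j k i then wt E i j + wt E i k
      else if star3 T i j k then wt E i j + wt E j k + wt E i k
      else 0)"

text \<open>Unordered triples of distinct indices, represented as i < j < k.\<close>
definition triples :: "nat \<Rightarrow> (nat \<times> nat \<times> nat) set" where
  "triples n = {(i, j, k). i < j \<and> j < k \<and> k < n}"

definition TC :: "nat \<Rightarrow> (nat \<Rightarrow> nat \<Rightarrow> bool) \<Rightarrow> hctree \<Rightarrow> real" where
  "TC n E T = (\<Sum>(i, j, k)\<in>triples n. trip_cost E T i j k)"

definition BC :: "nat \<Rightarrow> (nat \<Rightarrow> nat \<Rightarrow> bool) \<Rightarrow> real" where
  "BC n E = (\<Sum>(i, j, k)\<in>triples n.
      min (wt E i j + wt E i k) (min (wt E i j + wt E j k) (wt E i k + wt E j k)))"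

definition rho :: "nat \<Rightarrow> (nat \<Rightarrow> nat \<Rightarrow> bool) \<Rightarrow> hctree \<Rightarrow> ereal" where
  "rho n E T = (if BC n E = 0 then (if TC n E T = 0 then 1 else \<infinity>)
                else ereal (TC n E T / BC n E))"

definition rho_star :: "nat \<Rightarrow> (nat \<Rightarrow> nat \<Rightarrow> bool) \<Rightarrow> ereal" where
  "rho_star n E = (INF T\<in>{T. is_hctree n T}. rho n E T)"

end

theory Submission
  imports Defs
begin


abbreviation lvs :: "hctree \<Rightarrow> nat set" where "lvs t \<equiv> set (leaves t)"

lemma size_child: "t \<in> set ts \<Longrightarrow> size t < size (Node ts)"
  by (induction ts) auto

lemma sub_refl: "t \<in> subtrees t"
  by (cases t) auto

lemma sub_trans: "u \<in> subtrees v \<Longrightarrow> v \<in> subtrees w \<Longrightarrow> u \<in> subtrees w"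
proof (induction w arbitrary: u v)
  case (Leaf x) then show ?case by auto
next
  case (Node ts) then show ?case by auto
qed

lemma sub_leaves: "u \<in> subtrees v \<Longrightarrow> lvs u \<subseteq> lvs v"
  by (induction v arbitrary: u) auto

lemma sub_size: "u \<in> subtrees v \<Longrightarrow> size u \<le> size v"
proof (induction v arbitrary: u)
  case (Leaf x) then show ?case by auto
next
  case (Node ts) then show ?case using size_child by fastforce
qed

lemma sub_size_strict: "u \<in> subtrees v \<Longrightarrow> u \<noteq> v \<Longrightarrow> size u < size v"
proof (induction v arbitrary: u)
  case (Leaf x) then show ?case by auto
next
  case (Node ts)
  then obtain t where "t \<in> set ts" "u \<in> subtrees t" by auto
  then show ?case using sub_size size_child by (meson le_less_trans)
qed

lemma sub_antisym: "u \<in> subtrees v \<Longrightarrow> v \<in> subtrees u \<Longrightarrow> u = v"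
  using sub_size sub_size_strict by (meson leD)

lemma sub_distinct: "distinct (leaves v) \<Longrightarrow> u \<in> subtrees v \<Longrightarrow> distinct (leaves u)"
proof (induction v arbitrary: u)
  case (Leaf x) then show ?case by auto
next
  case (Node ts)
  then show ?case by (auto simp: distinct_concat_iff)
qed

lemma finite_sub: "finite (subtrees t)"
  by (induction t) auto

lemma leaf_sub: "i \<in> lvs t \<Longrightarrow> Leaf i \<in> subtrees t"
  by (induction t) auto

lemma disj_children:
  assumes "distinct (concat (map leaves ts))" "t1 \<in> set ts" "t2 \<in> set ts" "t1 \<noteq> t2"
  shows "lvs t1 \<inter> lvs t2 = {}"
proof -
  obtain p q where ts: "ts = p @ t1 # q" using assms(2) by (meson split_list)
  then have "t2 \<in> set p \<or> t2 \<in> set q" using assms by auto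
  then show ?thesis
  proof
    assume "t2 \<in> set p"
    then obtain r s where "p = r @ t2 # s" by (meson split_list)
    then show ?thesis using assms(1) ts by auto
  next
    assume "t2 \<in> set q"
    then obtain r s where "q = r @ t2 # s" by (meson split_list)
    then show ?thesis using assms(1) ts by auto
  qed
qed

lemma laminar:
  "distinct (leaves T) \<Longrightarrow> u \<in> subtrees T \<Longrightarrow> v \<in> subtrees T \<Longrightarrow> x \<in> lvs u \<Longrightarrow> x \<in> lvs v
   \<Longrightarrow> u \<in> subtrees v \<or> v \<in> subtrees u"
proof (induction T arbitrary: u v)
  case (Leaf y) then show ?case by auto
next
  case (Node ts)
  show ?case
  proof (cases "u = Node ts \<or> v = Node ts")
    case True then show ?thesis using Node.prems by auto
  next
    case False
    then obtain t1 t2 where t: "t1 \<in> set ts" "t2 \<in> set ts" "u \<in> subtrees t1" "v \<in> subtrees t2"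
      using Node.prems by auto
    show ?thesis
    proof (cases "t1 = t2")
      case True
      have "distinct (leaves t1)" using Node.prems(1) t(1) by (auto simp: distinct_concat_iff)
      then show ?thesis using Node.IH[OF t(1)] True t Node.prems by auto
    next
      case False
      have "x \<in> lvs t1" "x \<in> lvs t2" using sub_leaves t Node.prems by auto
      then show ?thesis using disj_children[OF _ t(1,2) False] Node.prems(1) by auto
    qed
  qed
qed



lemma lca_props:
  assumes dT: "distinct (leaves T)" and A: "A \<noteq> {}" "A \<subseteq> lvs T"
  shows "lca T A \<in> subtrees T \<and> A \<subseteq> lvs (lca T A) \<and>
         (\<forall>v\<in>subtrees T. A \<subseteq> lvs v \<longrightarrow> lca T A \<in> subtrees v)"
proof -
  define C where "C = {v \<in> subtrees T. A \<subseteq> lvs v}"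
  have fC: "finite C" unfolding C_def using finite_sub by auto
  have "T \<in> C" unfolding C_def using A sub_refl by auto
  then have ne: "size ` C \<noteq> {}" by auto
  obtain u where u: "u \<in> C" "size u = Min (size ` C)"
    using Min_in[OF finite_imageI[OF fC] ne] by auto
  obtain x where x: "x \<in> A" using A by auto
  have P: "u \<in> subtrees v" if "v \<in> C" for v
  proof -
    have "size u \<le> size v" using u fC that by simp
    moreover have "u \<in> subtrees v \<or> v \<in> subtrees u"
      using laminar[OF dT, of u v x] u(1) that x unfolding C_def by auto
    ultimately show ?thesis using sub_size_strict sub_refl by (metis leD)
  qed
  have Q: "u \<in> subtrees T \<and> A \<subseteq> lvs u \<and> (\<forall>v\<in>subtrees T. A \<subseteq> lvs v \<longrightarrow> u \<in> subtrees v)"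
    using u(1) P unfolding C_def by auto
  have "lca T A = u"
    unfolding lca_def
  proof (rule the_equality)
    show "u \<in> subtrees T \<and> A \<subseteq> lvs u \<and> (\<forall>v\<in>subtrees T. A \<subseteq> lvs v \<longrightarrow> u \<in> subtrees v)"
      by (rule Q)
  next
    fix w assume "w \<in> subtrees T \<and> A \<subseteq> lvs w \<and> (\<forall>v\<in>subtrees T. A \<subseteq> lvs v \<longrightarrow> w \<in> subtrees v)"
    then show "w = u" using Q sub_antisym by blast
  qed
  then show ?thesis using Q by simp
qed

lemma top_exists:
  assumes dT: "distinct (leaves T)" and i: "i \<in> lvs T" and n: "2 \<le> n"
  shows "\<exists>u. u \<in> subtrees T \<and> i \<in> lvs u \<and> 2 * card (lvs u) \<le> n \<and>
          (\<forall>v\<in>subtrees T. i \<in> lvs v \<and> 2 * card (lvs v) \<le> n \<longrightarrow> v \<in> subtrees u)"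
proof -
  define C where "C = {v \<in> subtrees T. i \<in> lvs v \<and> 2 * card (lvs v) \<le> n}"
  have fC: "finite C" unfolding C_def using finite_sub by auto
  have "Leaf i \<in> C" unfolding C_def using leaf_sub[OF i] n by auto
  then have ne: "size ` C \<noteq> {}" by auto
  obtain u where u: "u \<in> C" "size u = Max (size ` C)"
    using Max_in[OF finite_imageI[OF fC] ne] by auto
  have P: "v \<in> subtrees u" if "v \<in> C" for v
  proof -
    have "size v \<le> size u" using u fC that by simp
    moreover have "u \<in> subtrees v \<or> v \<in> subtrees u"
      using laminar[OF dT, of u v i] u(1) that unfolding C_def by auto
    ultimately show ?thesis using sub_size_strict sub_refl by (metis leD)
  qed
  show ?thesis using u(1) P unfolding C_def by auto
qed

context
  fixes n T
  assumes hc: "is_hctree n T"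
begin

lemma dT: "distinct (leaves T)" using hc unfolding is_hctree_def by auto
lemma lT: "lvs T = {0..<n}" using hc unfolding is_hctree_def by auto

lemma lca2:
  assumes "a < n" "b < n"
  shows "lca T {a,b} \<in> subtrees T" "a \<in> lvs (lca T {a,b})" "b \<in> lvs (lca T {a,b})"
    "\<And>v. v \<in> subtrees T \<Longrightarrow> a \<in> lvs v \<Longrightarrow> b \<in> lvs v \<Longrightarrow> lca T {a,b} \<in> subtrees v"
  using lca_props[OF dT, of "{a,b}"] assms lT by auto

lemma lca3:
  assumes "a < n" "b < n" "c < n"
  shows "lca T {a,b,c} \<in> subtrees T" "a \<in> lvs (lca T {a,b,c})" "b \<in> lvs (lca T {a,b,c})"
    "c \<in> lvs (lca T {a,b,c})"
    "\<And>v. v \<in> subtrees T \<Longrightarrow> a \<in> lvs v \<Longrightarrow> b \<in> lvs v \<Longrightarrow> c \<in> lvs v \<Longrightarrow> lca T {a,b,c} \<in> subtrees v"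
  using lca_props[OF dT, of "{a,b,c}"] assms lT by auto

lemma not_sep_eq:
  assumes "a < n" "b < n" "c < n" "\<not> sep T a b c"
  shows "lca T {a,b} = lca T {a,b,c}"
proof -
  have "lca T {a,b} \<in> subtrees (lca T {a,b,c})"
    using lca2(4)[OF assms(1,2)] lca3[OF assms(1-3)] by auto
  then show ?thesis using assms(4) unfolding sep_def proper_desc_def by auto
qed

lemma bad_not_sep:
  assumes "a < n" "b < n" "c < n" "c \<in> lvs (lca T {a,b})"
  shows "\<not> sep T a b c"
proof -
  have 1: "lca T {a,b} \<in> subtrees (lca T {a,b,c})"
    using lca2(4)[OF assms(1,2)] lca3[OF assms(1-3)] by auto
  have 2: "lca T {a,b,c} \<in> subtrees (lca T {a,b})"
    using lca3(5)[OF assms(1-3)] lca2[OF assms(1,2)] assms(4) by auto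
  show ?thesis using sub_antisym[OF 1 2] unfolding sep_def proper_desc_def by auto
qed

lemma cost_lower:
  assumes "i < n" "j < n" "k < n"
  shows "trip_cost E T i j k \<ge>
     wt E i j * (if sep T i j k then 0 else 1) + wt E i k * (if sep T i k j then 0 else 1)
     + wt E j k * (if sep T j k i then 0 else 1)"
proof -
  have st: "star3 T i j k" if "\<not> sep T i j k" "\<not> sep T j k i"
  proof -
    have "lca T {i,j} = lca T {i,j,k}" using not_sep_eq assms that by auto
    moreover have "lca T {j,k} = lca T {j,k,i}" using not_sep_eq assms that by auto
    moreover have "{j,k,i} = {i,j,k}" by auto
    ultimately show ?thesis unfolding star3_def by simp
  qed
  have w: "0 \<le> wt E x y" for x y unfolding wt_def by auto
  show ?thesis unfolding trip_cost_def using st w by auto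
qed

end



lemma triples_nested:
  "(\<Sum>(i,j,k)\<in>triples n. f i j k) =
   (\<Sum>i\<in>{0..<n}. \<Sum>j\<in>{0..<n}. \<Sum>k\<in>{0..<n}. if i<j \<and> j<k then f i j k else (0::real))"
proof -
  have "triples n = {x \<in> {0..<n} \<times> {0..<n} \<times> {0..<n}. case x of (i,j,k) \<Rightarrow> i<j \<and> j<k}"
    unfolding triples_def by auto
  then have "(\<Sum>(i,j,k)\<in>triples n. f i j k) =
     (\<Sum>x\<in>{0..<n} \<times> {0..<n} \<times> {0..<n}. if (case x of (i,j,k) \<Rightarrow> i<j \<and> j<k) then (case x of (i,j,k) \<Rightarrow> f i j k) else 0)"
    by (simp only:) (rule sum.inter_filter, simp)
  also have "\<dots> = (\<Sum>(i,j,k)\<in>{0..<n} \<times> {0..<n} \<times> {0..<n}. if i<j \<and> j<k then f i j k else 0)"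
    by (rule sum.cong[OF refl]) (auto split: prod.splits)
  also have "\<dots> = (\<Sum>i\<in>{0..<n}. \<Sum>j\<in>{0..<n}. \<Sum>k\<in>{0..<n}. if i<j \<and> j<k then f i j k else 0)"
    by (simp add: sum.cartesian_product)
  finally show ?thesis .
qed

lemma split3:
  fixes F :: "nat \<Rightarrow> nat \<Rightarrow> nat \<Rightarrow> real"
  shows "(\<Sum>a\<in>A. \<Sum>b\<in>A. \<Sum>c\<in>A. if a<b \<and> c\<noteq>a \<and> c\<noteq>b then F a b c else 0) =
   (\<Sum>a\<in>A. \<Sum>b\<in>A. \<Sum>c\<in>A. if a<b \<and> b<c then F a b c + F a c b + F b c a else 0)"
proof -
  have pw: "(if a<b \<and> c\<noteq>a \<and> c\<noteq>b then F a b c else 0) =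
     (if a<b \<and> b<c then F a b c else 0) + (if a<c \<and> c<b then F a b c else 0)
     + (if c<a \<and> a<b then F a b c else 0)" for a b c
    by auto
  have s2: "(\<Sum>a\<in>A. \<Sum>b\<in>A. \<Sum>c\<in>A. if a<c \<and> c<b then F a b c else 0) =
            (\<Sum>a\<in>A. \<Sum>b\<in>A. \<Sum>c\<in>A. if a<b \<and> b<c then F a c b else 0)"
    by (rule sum.cong[OF refl], rule sum.swap)
  have s3: "(\<Sum>a\<in>A. \<Sum>b\<in>A. \<Sum>c\<in>A. if c<a \<and> a<b then F a b c else 0) =
            (\<Sum>a\<in>A. \<Sum>b\<in>A. \<Sum>c\<in>A. if a<b \<and> b<c then F b c a else 0)"
  proof -
    have "(\<Sum>a\<in>A. \<Sum>b\<in>A. \<Sum>c\<in>A. if c<a \<and> a<b then F a b c else 0) =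
          (\<Sum>a\<in>A. \<Sum>c\<in>A. \<Sum>b\<in>A. if c<a \<and> a<b then F a b c else 0)"
      by (rule sum.cong[OF refl], rule sum.swap)
    also have "\<dots> = (\<Sum>c\<in>A. \<Sum>a\<in>A. \<Sum>b\<in>A. if c<a \<and> a<b then F a b c else 0)"
      by (rule sum.swap)
    finally show ?thesis .
  qed
  have pw2: "(if a<b \<and> b<c then F a b c + F a c b + F b c a else 0) =
     (if a<b \<and> b<c then F a b c else 0) + (if a<b \<and> b<c then F a c b else 0)
     + (if a<b \<and> b<c then F b c a else 0)" for a b c
    by auto
  show ?thesis
    by (simp only: pw pw2 sum.distrib s2 s3)
qed



lemma tri_sum:
  fixes F :: "nat \<Rightarrow> nat \<Rightarrow> nat \<Rightarrow> real"
  shows "(\<Sum>(i,j,k)\<in>triples n. F i j k + F i k j + F j k i) =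
   (\<Sum>a\<in>{0..<n}. \<Sum>b\<in>{0..<n}. \<Sum>c\<in>{0..<n}. if a<b \<and> c\<noteq>a \<and> c\<noteq>b then F a b c else 0)"
  by (simp only: triples_nested split3)

context
  fixes n E d
  assumes G: "is_graph n E" and R: "d_regular n E d"
begin

lemma Esym: "E a b = E b a"
  using G unfolding is_graph_def by blast

lemma Eirr: "\<not> E a a"
  using G unfolding is_graph_def by blast

lemma wt_sym: "wt E a b = wt E b a"
  unfolding wt_def using Esym by simp

lemma wt_nn: "0 \<le> wt E a b" unfolding wt_def by auto

lemma deg: assumes "a < n" shows "(\<Sum>b\<in>{0..<n}. wt E a b) = real d"
proof -
  have "(\<Sum>b\<in>{0..<n}. wt E a b) = real (card ({0..<n} \<inter> Collect (E a)))"
    unfolding wt_def by (simp add: sum.If_cases)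
  also have "{0..<n} \<inter> Collect (E a) = {v. v < n \<and> E a v}" by auto
  finally show ?thesis using R assms unfolding d_regular_def by simp
qed

lemma cube_prod:
  "(\<Sum>a\<in>{0..<n}. \<Sum>b\<in>{0..<n}. \<Sum>c\<in>{0..<n}. wt E c a * wt E c b) = real n * real d ^ 2"
proof -
  have "(\<Sum>a\<in>{0..<n}. \<Sum>b\<in>{0..<n}. \<Sum>c\<in>{0..<n}. wt E c a * wt E c b) =
        (\<Sum>a\<in>{0..<n}. \<Sum>c\<in>{0..<n}. \<Sum>b\<in>{0..<n}. wt E c a * wt E c b)"
    by (rule sum.cong[OF refl], rule sum.swap)
  also have "\<dots> = (\<Sum>c\<in>{0..<n}. \<Sum>a\<in>{0..<n}. \<Sum>b\<in>{0..<n}. wt E c a * wt E c b)"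
    by (rule sum.swap)
  also have "\<dots> = (\<Sum>c\<in>{0..<n}. (\<Sum>a\<in>{0..<n}. wt E c a) * (\<Sum>b\<in>{0..<n}. wt E c b))"
    by (simp add: sum_product)
  also have "\<dots> = (\<Sum>c\<in>{0..<n}. real d * real d)"
    by (rule sum.cong[OF refl]) (simp add: deg)
  finally show ?thesis by (simp add: power2_eq_square)
qed

lemma BC_upper: "BC n E \<le> real n * real d ^ 2"
proof -
  let ?F = "\<lambda>a b c. wt E c a * wt E c b"
  have "BC n E \<le> (\<Sum>(i,j,k)\<in>triples n. ?F i j k + ?F i k j + ?F j k i)"
    unfolding BC_def
  proof (rule sum_mono, clarify)
    fix i j k
    show "min (wt E i j + wt E i k) (min (wt E i j + wt E j k) (wt E i k + wt E j k))
          \<le> ?F i j k + ?F i k j + ?F j k i"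
      unfolding wt_sym[of k i] wt_sym[of k j] wt_sym[of j i]
      by (cases "E i j"; cases "E i k"; cases "E j k") (simp_all add: wt_def)
  qed
  also have "\<dots> = (\<Sum>a\<in>{0..<n}. \<Sum>b\<in>{0..<n}. \<Sum>c\<in>{0..<n}. if a<b \<and> c\<noteq>a \<and> c\<noteq>b then ?F a b c else 0)"
    by (rule tri_sum)
  also have "\<dots> \<le> (\<Sum>a\<in>{0..<n}. \<Sum>b\<in>{0..<n}. \<Sum>c\<in>{0..<n}. ?F a b c)"
    by (intro sum_mono) (auto simp: wt_def)
  also have "\<dots> = real n * real d ^ 2" by (rule cube_prod)
  finally show ?thesis .
qed

lemma TC_upper: "TC n E T \<le> real n ^ 2 * real d"
proof -
  let ?F = "\<lambda>a b c::nat. wt E a b"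
  have "TC n E T \<le> (\<Sum>(i,j,k)\<in>triples n. ?F i j k + ?F i k j + ?F j k i)"
    unfolding TC_def
  proof (rule sum_mono, clarify)
    fix i j k
    show "trip_cost E T i j k \<le> ?F i j k + ?F i k j + ?F j k i"
      unfolding trip_cost_def using wt_nn[of i j] wt_nn[of i k] wt_nn[of j k] by auto
  qed
  also have "\<dots> = (\<Sum>a\<in>{0..<n}. \<Sum>b\<in>{0..<n}. \<Sum>c\<in>{0..<n}. if a<b \<and> c\<noteq>a \<and> c\<noteq>b then ?F a b c else 0)"
    by (rule tri_sum)
  also have "\<dots> \<le> (\<Sum>a\<in>{0..<n}. \<Sum>b\<in>{0..<n}. \<Sum>c\<in>{0..<n}. ?F a b c)"
    by (intro sum_mono) (auto simp: wt_def)
  also have "\<dots> = (\<Sum>a\<in>{0..<n}. real n * real d)"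
    by (rule sum.cong[OF refl]) (simp add: sum_distrib_left[symmetric] deg)
  finally show ?thesis by (simp add: power2_eq_square)
qed

lemma BC_lower:
  assumes d2: "2 \<le> d"
  shows "BC n E \<ge> real n / 3"
proof -
  let ?F = "\<lambda>a b c. wt E c a * wt E c b"
  have "(\<Sum>(i,j,k)\<in>triples n. ?F i j k + ?F i k j + ?F j k i) \<le> 3 * BC n E"
    unfolding BC_def sum_distrib_left
  proof (rule sum_mono, clarify)
    fix i j k
    show "?F i j k + ?F i k j + ?F j k i \<le>
       3 * min (wt E i j + wt E i k) (min (wt E i j + wt E j k) (wt E i k + wt E j k))"
      unfolding wt_sym[of k i] wt_sym[of k j] wt_sym[of j i]
      by (cases "E i j"; cases "E i k"; cases "E j k") (simp_all add: wt_def)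
  qed
  moreover have "(\<Sum>(i,j,k)\<in>triples n. ?F i j k + ?F i k j + ?F j k i) =
     (\<Sum>a\<in>{0..<n}. \<Sum>b\<in>{0..<n}. \<Sum>c\<in>{0..<n}. if a<b \<and> c\<noteq>a \<and> c\<noteq>b then ?F a b c else 0)"
    by (rule tri_sum)
  moreover have "\<dots> = (\<Sum>c\<in>{0..<n}. \<Sum>a\<in>{0..<n}. \<Sum>b\<in>{0..<n}. if a<b \<and> c\<noteq>a \<and> c\<noteq>b then ?F a b c else 0)"
  proof -
    have "(\<Sum>a\<in>{0..<n}. \<Sum>b\<in>{0..<n}. \<Sum>c\<in>{0..<n}. if a<b \<and> c\<noteq>a \<and> c\<noteq>b then ?F a b c else 0)
       = (\<Sum>a\<in>{0..<n}. \<Sum>c\<in>{0..<n}. \<Sum>b\<in>{0..<n}. if a<b \<and> c\<noteq>a \<and> c\<noteq>b then ?F a b c else 0)"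
      by (rule sum.cong[OF refl], rule sum.swap)
    also have "\<dots> = (\<Sum>c\<in>{0..<n}. \<Sum>a\<in>{0..<n}. \<Sum>b\<in>{0..<n}. if a<b \<and> c\<noteq>a \<and> c\<noteq>b then ?F a b c else 0)"
      by (rule sum.swap)
    finally show ?thesis .
  qed
  moreover have "\<dots> \<ge> (\<Sum>c\<in>{0..<n}. 1)"
  proof (rule sum_mono)
    fix c assume c: "c \<in> {0..<n}"
    let ?S = "{v. v < n \<and> E c v}"
    have "card ?S = d" using R c unfolding d_regular_def by auto
    then have "2 \<le> card ?S" using d2 by simp
    then have "?S \<noteq> {}" by (metis card.empty not_numeral_le_zero)
    then obtain x where x: "x \<in> ?S" by blast
    have fS: "finite ?S" by simp
    have "card (?S - {x}) = card ?S - 1" using x fS by (simp add: card_Diff_singleton)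
    then have "card (?S - {x}) \<noteq> 0" using \<open>2 \<le> card ?S\<close> by simp
    then have "?S - {x} \<noteq> {}" by (metis card.empty)
    then obtain y where y: "y \<in> ?S" "y \<noteq> x" by blast
    obtain a0 b0 where ab: "a0 < b0" "a0 < n" "b0 < n" "E c a0" "E c b0"
    proof (cases "x < y")
      case True then show ?thesis using that[of x y] x y by blast
    next
      case False then have "y < x" using y by simp
      then show ?thesis using that[of y x] x y by blast
    qed
    have "c \<noteq> a0" "c \<noteq> b0" using ab Eirr by auto
    then have "1 \<le> (if a0<b0 \<and> c\<noteq>a0 \<and> c\<noteq>b0 then ?F a0 b0 c else 0)"
      using ab by (simp add: wt_def)
    also have "\<dots> \<le> (\<Sum>b\<in>{0..<n}. if a0<b \<and> c\<noteq>a0 \<and> c\<noteq>b then ?F a0 b c else 0)"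
      by (rule member_le_sum) (use ab in \<open>auto simp: wt_def\<close>)
    also have "\<dots> \<le> (\<Sum>a\<in>{0..<n}. \<Sum>b\<in>{0..<n}. if a<b \<and> c\<noteq>a \<and> c\<noteq>b then ?F a b c else 0)"
      by (rule member_le_sum[where f = "\<lambda>a. \<Sum>b\<in>{0..<n}. if a<b \<and> c\<noteq>a \<and> c\<noteq>b then ?F a b c else 0"])
         (use ab in \<open>auto simp: wt_def intro!: sum_nonneg\<close>)
    finally show "1 \<le> (\<Sum>a\<in>{0..<n}. \<Sum>b\<in>{0..<n}. if a<b \<and> c\<noteq>a \<and> c\<noteq>b then ?F a b c else 0)" .
  qed
  ultimately have "real n \<le> 3 * BC n E" by simp
  then show ?thesis by simp
qed

end

lemma d_ge2:
  assumes G: "is_graph n E" and R: "d_regular n E d" and X: "edge_expander n E (real d / 10) (real n / 2)"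
    and n: "4 \<le> n" and d: "d > 0"
  shows "2 \<le> d"
proof (rule ccontr)
  assume "\<not> 2 \<le> d"
  then have d1: "d = 1" using d by simp
  have "card {v. v < n \<and> E 0 v} = 1" using R n d1 unfolding d_regular_def by simp
  then obtain v where v: "{v. v < n \<and> E 0 v} = {v}" using card_1_singletonE by blast
  then have vn: "v < n" "E 0 v" by auto
  have c1: "card {w. w < n \<and> E v w} = 1" using R vn d1 unfolding d_regular_def by simp
  have "E v 0" using G vn unfolding is_graph_def by blast
  then have z: "0 \<in> {w. w < n \<and> E v w}" using n by simp
  obtain z' where z': "{w. w < n \<and> E v w} = {z'}" using c1 card_1_singletonE by blast
  have v2: "{w. w < n \<and> E v w} = {0}" using z z' by simp
  have v0: "v \<noteq> 0" using G vn unfolding is_graph_def by blast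
  let ?S = "{0, v}"
  have sub: "?S \<subseteq> {0..<n}" using vn n by auto
  have cS: "card ?S = 2" using v0 by simp
  have le: "real (card ?S) \<le> real n / 2" unfolding cS using n by simp
  have "\<forall>S. S \<subseteq> {0..<n} \<longrightarrow> real (card S) \<le> real n / 2 \<longrightarrow>
        real (card {(u, v). u \<in> S \<and> v \<in> {0..<n} - S \<and> E u v}) \<ge> real d / 10 * real (card S)"
    using X unfolding edge_expander_def by simp
  then have ex: "real (card {(u, w). u \<in> ?S \<and> w \<in> {0..<n} - ?S \<and> E u w}) \<ge> real d / 10 * real (card ?S)"
    using sub le by blast
  have emp: "{(u, w). u \<in> ?S \<and> w \<in> {0..<n} - ?S \<and> E u w} = {}"
  proof (rule equals0I)
    fix p assume "p \<in> {(u, w). u \<in> ?S \<and> w \<in> {0..<n} - ?S \<and> E u w}"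
    then obtain u w where p: "p = (u, w)" "u \<in> ?S" "w \<in> {0..<n} - ?S" "E u w" by blast
    show False
    proof (cases "u = 0")
      case True
      then have "w \<in> {v. v < n \<and> E 0 v}" using p by simp
      then show False using v p(3) by simp
    next
      case False
      then have "u = v" using p by simp
      then have "w \<in> {w. w < n \<and> E v w}" using p by simp
      then show False using v2 p(3) by simp
    qed
  qed
  show False using ex unfolding emp cS using d1 by simp
qed



definition tp :: "nat \<Rightarrow> hctree \<Rightarrow> nat \<Rightarrow> hctree" where
  "tp n T a = (SOME u. u \<in> subtrees T \<and> a \<in> lvs u \<and> 2 * card (lvs u) \<le> n \<and>
          (\<forall>v\<in>subtrees T. a \<in> lvs v \<and> 2 * card (lvs v) \<le> n \<longrightarrow> v \<in> subtrees u))"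

context
  fixes n E d T
  assumes G: "is_graph n E" and R: "d_regular n E d" and hc: "is_hctree n T"
    and X: "edge_expander n E (real d / 10) (real n / 2)" and n2: "2 \<le> n"
begin

abbreviation P where "P a \<equiv> lvs (tp n T a)"

lemma tp_prop:
  assumes "a < n"
  shows "tp n T a \<in> subtrees T \<and> a \<in> P a \<and> 2 * card (P a) \<le> n \<and>
          (\<forall>v\<in>subtrees T. a \<in> lvs v \<and> 2 * card (lvs v) \<le> n \<longrightarrow> v \<in> subtrees (tp n T a))"
proof -
  have "a \<in> lvs T" using lT[OF hc] assms by simp
  from top_exists[OF dT[OF hc] this n2] show ?thesis
    unfolding tp_def by (rule someI_ex)
qed

lemma P_sub: "a < n \<Longrightarrow> P a \<subseteq> {0..<n}"
  using tp_prop sub_leaves lT[OF hc] by blast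

lemma P_eq:
  assumes a: "a < n" and b: "b \<in> P a"
  shows "P b = P a"
proof -
  have bn: "b < n" using P_sub[OF a] b by auto
  have "tp n T a \<in> subtrees (tp n T b)" using tp_prop[OF a] tp_prop[OF bn] b by blast
  then have "a \<in> P b" using sub_leaves tp_prop[OF a] by blast
  then have "tp n T b \<in> subtrees (tp n T a)" using tp_prop[OF a] tp_prop[OF bn] by blast
  with \<open>tp n T a \<in> subtrees (tp n T b)\<close> show ?thesis using sub_antisym by metis
qed

lemma P_big:
  assumes a: "a < n" and b: "b < n" and nb: "b \<notin> P a"
  shows "n < 2 * card (lvs (lca T {a,b}))"
proof (rule ccontr)
  assume "\<not> n < 2 * card (lvs (lca T {a,b}))"
  then have "lca T {a,b} \<in> subtrees (tp n T a)"
    using tp_prop[OF a] lca2[OF hc a b] by auto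
  then have "b \<in> P a" using lca2[OF hc a b] sub_leaves by blast
  then show False using nb by simp
qed

lemma cut_sum:
  "(\<Sum>a\<in>{0..<n}. real (card {b \<in> {0..<n}. E a b \<and> b \<notin> P a})) \<ge> real n * (real d / 10)"
proof -
  define PP where "PP = P ` {0..<n}"
  have U: "\<Union>PP = {0..<n}" unfolding PP_def using P_sub tp_prop by fastforce
  have fPP: "finite PP" unfolding PP_def by simp
  have fA: "\<forall>A\<in>PP. finite A" unfolding PP_def by simp
  have dj: "\<forall>A\<in>PP. \<forall>B\<in>PP. A \<noteq> B \<longrightarrow> A \<inter> B = {}"
  proof (intro ballI impI)
    fix A B assume AB: "A \<in> PP" "B \<in> PP" "A \<noteq> B"
    obtain a where a: "a < n" "A = P a" using AB(1) unfolding PP_def by auto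
    obtain b where b: "b < n" "B = P b" using AB(2) unfolding PP_def by auto
    have ab: "a < n" "b < n" "A = P a" "B = P b" using a b by auto
    show "A \<inter> B = {}"
    proof (rule ccontr)
      assume "A \<inter> B \<noteq> {}"
      then obtain x where x: "x \<in> P a" "x \<in> P b" using ab by auto
      have "P x = P a" "P x = P b" using P_eq[OF ab(1) x(1)] P_eq[OF ab(2) x(2)] by auto
      then show False using \<open>A \<noteq> B\<close> ab by simp
    qed
  qed
  let ?X = "\<lambda>a. real (card {b \<in> {0..<n}. E a b \<and> b \<notin> P a})"
  have "(\<Sum>a\<in>{0..<n}. ?X a) = (\<Sum>C\<in>PP. \<Sum>a\<in>C. ?X a)"
    using sum.Union_disjoint[OF fA dj, of ?X] U by simp
  also have "\<dots> \<ge> (\<Sum>C\<in>PP. \<Sum>a\<in>C. real d / 10)"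
  proof (rule sum_mono)
    fix C assume C: "C \<in> PP"
    then obtain a0 where a0: "a0 < n" "C = P a0" unfolding PP_def by auto
    have Csub: "C \<subseteq> {0..<n}" using P_sub a0 by simp
    have fC: "finite C" using Csub finite_subset by blast
    have "(\<Sum>a\<in>C. ?X a) = (\<Sum>a\<in>C. real (card {b \<in> {0..<n} - C. E a b}))"
    proof (rule sum.cong[OF refl])
      fix a assume "a \<in> C"
      then have "P a = C" using P_eq a0 by simp
      then have "{b \<in> {0..<n}. E a b \<and> b \<notin> P a} = {b \<in> {0..<n} - C. E a b}" by auto
      then show "?X a = real (card {b \<in> {0..<n} - C. E a b})" by simp
    qed
    also have "\<dots> = real (\<Sum>a\<in>C. card {b \<in> {0..<n} - C. E a b})" by simp
    also have "(\<Sum>a\<in>C. card {b \<in> {0..<n} - C. E a b}) = card (SIGMA u:C. {b \<in> {0..<n} - C. E u b})"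
      by (rule card_SigmaI[symmetric]) (use fC in auto)
    also have "(SIGMA u:C. {b \<in> {0..<n} - C. E u b}) = {(u, v). u \<in> C \<and> v \<in> {0..<n} - C \<and> E u v}"
      by auto
    finally have eq: "(\<Sum>a\<in>C. ?X a) = real (card {(u, v). u \<in> C \<and> v \<in> {0..<n} - C \<and> E u v})" .
    have "2 * card C \<le> n" using tp_prop[OF a0(1)] a0 by simp
    then have "real (card C) \<le> real n / 2" by simp
    then have "real (card {(u, v). u \<in> C \<and> v \<in> {0..<n} - C \<and> E u v}) \<ge> real d / 10 * real (card C)"
      using X Csub unfolding edge_expander_def by blast
    then show "(\<Sum>a\<in>C. real d / 10) \<le> (\<Sum>a\<in>C. ?X a)" using eq by (simp add: mult.commute)
  qed
  also have "(\<Sum>C\<in>PP. \<Sum>a\<in>C. real d / 10) = (\<Sum>a\<in>{0..<n}. real d / 10)"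
    using sum.Union_disjoint[OF fA dj, of "\<lambda>_. real d / 10"] U by simp
  also have "\<dots> = real n * (real d / 10)" by simp
  finally show ?thesis .
qed

end



context
  fixes n E d T
  assumes G: "is_graph n E" and R: "d_regular n E d" and hc: "is_hctree n T"
    and X: "edge_expander n E (real d / 10) (real n / 2)" and n4: "4 \<le> n"
begin

definition g :: "nat \<Rightarrow> nat \<Rightarrow> nat \<Rightarrow> real" where
  "g a b c = wt E a b * (if sep T a b c then 0 else 1)"

definition h :: "nat \<Rightarrow> nat \<Rightarrow> real" where
  "h a b = (\<Sum>c\<in>{0..<n}. if c \<noteq> a \<and> c \<noteq> b then g a b c else 0)"

lemma g_nn: "0 \<le> g a b c" unfolding g_def wt_def by auto

lemma h_nn: "0 \<le> h a b" unfolding h_def by (auto intro!: sum_nonneg simp: g_nn)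

lemma h_sym: "h a b = h b a"
proof -
  have "g a b c = g b a c" for c
    unfolding g_def sep_def using wt_sym[OF G R, of a b] by (simp add: insert_commute)
  then show ?thesis unfolding h_def by (metis (no_types, lifting))
qed

lemma h_big:
  assumes a: "a < n" and b: "b < n" and ab: "a \<noteq> b" and E: "E a b" and nb: "b \<notin> P n T a"
  shows "real n / 2 - 2 \<le> h a b"
proof -
  have n2: "2 \<le> n" using n4 by simp
  let ?l = "lca T {a,b}"
  let ?L = "lvs ?l"
  have Lsub: "?L \<subseteq> {0..<n}" using lca2[OF hc a b] sub_leaves lT[OF hc] by blast
  have big: "n < 2 * card ?L" using P_big[OF G R hc X n2 a b nb] .
  have abL: "a \<in> ?L" "b \<in> ?L" using lca2[OF hc a b] by auto
  have "h a b \<ge> (\<Sum>c\<in>{0..<n}. if c \<in> ?L - {a,b} then 1 else 0)"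
    unfolding h_def
  proof (rule sum_mono)
    fix c assume c: "c \<in> {0..<n}"
    show "(if c \<in> ?L - {a,b} then 1 else 0) \<le> (if c \<noteq> a \<and> c \<noteq> b then g a b c else 0)"
    proof (cases "c \<in> ?L - {a,b}")
      case True
      then have "\<not> sep T a b c" using bad_not_sep[OF hc a b] c by auto
      then show ?thesis using True E unfolding g_def wt_def by auto
    next
      case False then show ?thesis using g_nn by auto
    qed
  qed
  also have "(\<Sum>c\<in>{0..<n}. if c \<in> ?L - {a,b} then 1 else (0::real)) = real (card (?L - {a,b}))"
  proof -
    have "(\<Sum>c\<in>{0..<n}. if c \<in> ?L - {a,b} then 1 else (0::real)) = (\<Sum>c\<in>{0..<n} \<inter> (?L - {a,b}). 1)"
      by (rule sum.inter_restrict[symmetric]) simp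
    also have "\<dots> = real (card ({0..<n} \<inter> (?L - {a,b})))" by simp
    also have "{0..<n} \<inter> (?L - {a,b}) = ?L - {a,b}" using Lsub by auto
    finally show ?thesis .
  qed
  also have "card (?L - {a,b}) = card ?L - 2"
    using abL ab by (simp add: card_Diff_subset)
  finally have "real (card ?L - 2) \<le> h a b" .
  moreover have "card ?L \<ge> 2"
  proof -
    have "{a,b} \<subseteq> ?L" using abL by auto
    then have "card {a,b} \<le> card ?L" by (simp add: card_mono)
    then show ?thesis using ab by simp
  qed
  ultimately have "real (card ?L) - 2 \<le> h a b" by (simp add: of_nat_diff)
  moreover have "real n < 2 * real (card ?L)" using big by linarith
  ultimately show ?thesis by linarith
qed

lemma TC_lower: "TC n E T \<ge> (real n / 2 - 2) * (real n * (real d / 10)) / 2"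
proof -
  have n2: "2 \<le> n" using n4 by simp
  have "TC n E T \<ge> (\<Sum>(i,j,k)\<in>triples n. g i j k + g i k j + g j k i)"
    unfolding TC_def
  proof (rule sum_mono, clarify)
    fix i j k assume "(i,j,k) \<in> triples n"
    then have "i < n" "j < n" "k < n" unfolding triples_def by auto
    then show "g i j k + g i k j + g j k i \<le> trip_cost E T i j k"
      using cost_lower[OF hc] unfolding g_def by blast
  qed
  also have "(\<Sum>(i,j,k)\<in>triples n. g i j k + g i k j + g j k i) =
    (\<Sum>a\<in>{0..<n}. \<Sum>b\<in>{0..<n}. \<Sum>c\<in>{0..<n}. if a<b \<and> c\<noteq>a \<and> c\<noteq>b then g a b c else 0)"
    by (rule tri_sum)
  also have "\<dots> = (\<Sum>a\<in>{0..<n}. \<Sum>b\<in>{0..<n}. if a<b then h a b else 0)"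
  proof (intro sum.cong refl)
    fix a b
    show "(\<Sum>c\<in>{0..<n}. if a<b \<and> c\<noteq>a \<and> c\<noteq>b then g a b c else 0) = (if a<b then h a b else 0)"
      unfolding h_def by (cases "a < b") auto
  qed
  finally have TS: "TC n E T \<ge> (\<Sum>a\<in>{0..<n}. \<Sum>b\<in>{0..<n}. if a<b then h a b else 0)" .
  let ?S = "(\<Sum>a\<in>{0..<n}. \<Sum>b\<in>{0..<n}. if a<b then h a b else 0)"
  have sw: "(\<Sum>a\<in>{0..<n}. \<Sum>b\<in>{0..<n}. if b<a then h a b else 0) = ?S"
  proof -
    have "(\<Sum>a\<in>{0..<n}. \<Sum>b\<in>{0..<n}. if b<a then h a b else 0) =
          (\<Sum>b\<in>{0..<n}. \<Sum>a\<in>{0..<n}. if b<a then h a b else 0)"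
      by (rule sum.swap)
    also have "\<dots> = ?S" by (intro sum.cong refl) (metis h_sym)
    finally show ?thesis .
  qed
  have "2 * ?S = (\<Sum>a\<in>{0..<n}. \<Sum>b\<in>{0..<n}. if a \<noteq> b then h a b else 0)"
  proof -
    have "(\<Sum>a\<in>{0..<n}. \<Sum>b\<in>{0..<n}. if a \<noteq> b then h a b else 0) =
      (\<Sum>a\<in>{0..<n}. \<Sum>b\<in>{0..<n}. (if a<b then h a b else 0) + (if b<a then h a b else 0))"
      by (intro sum.cong refl) auto
    also have "\<dots> = ?S + (\<Sum>a\<in>{0..<n}. \<Sum>b\<in>{0..<n}. if b<a then h a b else 0)"
      by (simp add: sum.distrib)
    finally show ?thesis using sw by simp
  qed
  also have "\<dots> \<ge> (\<Sum>a\<in>{0..<n}. \<Sum>b\<in>{0..<n}. if E a b \<and> b \<notin> P n T a then real n / 2 - 2 else 0)"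
  proof (intro sum_mono)
    fix a b assume a: "a \<in> {0..<n}" and b: "b \<in> {0..<n}"
    show "(if E a b \<and> b \<notin> P n T a then real n / 2 - 2 else 0) \<le> (if a \<noteq> b then h a b else 0)"
    proof (cases "E a b \<and> b \<notin> P n T a")
      case True
      then have "a \<noteq> b" using Eirr[OF G R] by auto
      then show ?thesis using True h_big a b by auto
    next
      case False then show ?thesis using h_nn by auto
    qed
  qed
  also have "(\<Sum>a\<in>{0..<n}. \<Sum>b\<in>{0..<n}. if E a b \<and> b \<notin> P n T a then real n / 2 - 2 else 0)
     = (\<Sum>a\<in>{0..<n}. (real n / 2 - 2) * real (card {b \<in> {0..<n}. E a b \<and> b \<notin> P n T a}))"
  proof (intro sum.cong refl)
    fix a
    show "(\<Sum>b\<in>{0..<n}. if E a b \<and> b \<notin> P n T a then real n / 2 - 2 else 0) =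
       (real n / 2 - 2) * real (card {b \<in> {0..<n}. E a b \<and> b \<notin> P n T a})"
      by (simp add: sum.inter_filter[symmetric])
  qed
  also have "\<dots> = (real n / 2 - 2) * (\<Sum>a\<in>{0..<n}. real (card {b \<in> {0..<n}. E a b \<and> b \<notin> P n T a}))"
    by (simp add: sum_distrib_left)
  finally have "2 * ?S \<ge> (real n / 2 - 2) * (\<Sum>a\<in>{0..<n}. real (card {b \<in> {0..<n}. E a b \<and> b \<notin> P n T a}))" .
  moreover have "(\<Sum>a\<in>{0..<n}. real (card {b \<in> {0..<n}. E a b \<and> b \<notin> P n T a})) \<ge> real n * (real d / 10)"
    by (rule cut_sum[OF G R hc X n2])
  moreover have "real n / 2 - 2 \<ge> 0" using n4 by simp
  ultimately have "2 * ?S \<ge> (real n / 2 - 2) * (real n * (real d / 10))"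
    by (meson mult_left_mono order_trans)
  then show ?thesis using TS by linarith
qed

end



lemma T0_hc: "0 < n \<Longrightarrow> is_hctree n (Node (map Leaf [0..<n]))"
  unfolding is_hctree_def by (simp add: comp_def)

lemma TC_nn: "0 \<le> TC n E T"
  unfolding TC_def trip_cost_def wt_def by (auto intro!: sum_nonneg)

theorem theorem3:
  fixes d :: nat
  assumes "d > 0"
  shows "\<exists>c1 c2 :: real. c1 > 0 \<and> c2 > 0 \<and>
          (\<exists>N::nat. \<forall>n\<ge>N. \<forall>E. is_graph n E \<and> d_regular n E d \<and>
               edge_expander n E (real d / 10) (real n / 2) \<longrightarrow>
               ereal (c1 * real n) \<le> rho_star n E \<and> rho_star n E \<le> ereal (c2 * real n))"
proof (intro exI conjI)
  show "(0::real) < 1 / (80 * real d)" using assms by simp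
  show "(0::real) < 3 * real d" using assms by simp
  show "\<forall>n\<ge>8. \<forall>E. is_graph n E \<and> d_regular n E d \<and>
               edge_expander n E (real d / 10) (real n / 2) \<longrightarrow>
               ereal (1 / (80 * real d) * real n) \<le> rho_star n E \<and> rho_star n E \<le> ereal (3 * real d * real n)"
  proof (intro allI impI)
    fix n :: nat and E
    assume n8: "8 \<le> n" and H: "is_graph n E \<and> d_regular n E d \<and> edge_expander n E (real d / 10) (real n / 2)"
    then have G: "is_graph n E" and R: "d_regular n E d" and X: "edge_expander n E (real d / 10) (real n / 2)"
      by auto
    have n4: "4 \<le> n" using n8 by simp
    have d2: "2 \<le> d" using d_ge2[OF G R X n4 assms] .
    have BCl: "real n / 3 \<le> BC n E" using BC_lower[OF G R d2] .
    have BCu: "BC n E \<le> real n * real d ^ 2" using BC_upper[OF G R] .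
    have BCp: "0 < BC n E" using BCl n8 by linarith
    have dpos: "0 < real d" using assms by simp
    have npos: "0 < real n" using n8 by simp
    have rho_eq: "rho n E T = ereal (TC n E T / BC n E)" for T
      unfolding rho_def using BCp by simp
    show "ereal (1 / (80 * real d) * real n) \<le> rho_star n E \<and> rho_star n E \<le> ereal (3 * real d * real n)"
    proof
      show "ereal (1 / (80 * real d) * real n) \<le> rho_star n E"
        unfolding rho_star_def
      proof (rule INF_greatest)
        fix T assume "T \<in> {T. is_hctree n T}"
        then have hc: "is_hctree n T" by simp
        have TCl: "(real n / 2 - 2) * (real n * (real d / 10)) / 2 \<le> TC n E T"
          using TC_lower[OF G R hc X n4] .
        have id: "(real n / 2 - 2) * (real n * (real d / 10)) / 2 - real n * real n * real d / 80
                 = real n * real d * (real n - 8) / 80"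
          by (simp add: field_simps)
        have "0 \<le> real n * real d * (real n - 8) / 80" using n8 by simp
        then have TCl2: "real n * real n * real d / 80 \<le> TC n E T" using TCl id by linarith
        have "1 / (80 * real d) * real n * BC n E \<le> 1 / (80 * real d) * real n * (real n * real d ^ 2)"
          using BCu dpos npos by (intro mult_left_mono) auto
        also have "\<dots> = real n * real n * real d / 80" using dpos by (simp add: field_simps power2_eq_square)
        finally have "1 / (80 * real d) * real n * BC n E \<le> TC n E T" using TCl2 by linarith
        then have "1 / (80 * real d) * real n \<le> TC n E T / BC n E"
          using BCp by (simp add: pos_le_divide_eq)
        then show "ereal (1 / (80 * real d) * real n) \<le> rho n E T" unfolding rho_eq by simp
      qed
    next
      let ?T0 = "Node (map Leaf [0..<n])"
      have hc0: "is_hctree n ?T0" using T0_hc n8 by simp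
      have "rho_star n E \<le> rho n E ?T0"
        unfolding rho_star_def by (rule INF_lower) (simp add: hc0)
      also have "rho n E ?T0 \<le> ereal (3 * real d * real n)"
      proof -
        have TCu: "TC n E ?T0 \<le> real n ^ 2 * real d" using TC_upper[OF G R] .
        have "real n ^ 2 * real d = 3 * real d * real n * (real n / 3)" by (simp add: power2_eq_square)
        also have "\<dots> \<le> 3 * real d * real n * BC n E" using BCl dpos npos by (intro mult_left_mono) auto
        finally have "TC n E ?T0 \<le> 3 * real d * real n * BC n E" using TCu by linarith
        then have "TC n E ?T0 / BC n E \<le> 3 * real d * real n" using BCp by (simp add: pos_divide_le_eq)
        then show ?thesis unfolding rho_eq by simp
      qed
      finally show "rho_star n E \<le> ereal (3 * real d * real n)" .
    qed
  qed
qed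


end
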